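(* For every natural number $n\geq 2$, the $n$-Split Interval $S_n(I)$ is a Rosenthal compactum.
   Context: A Rosenthal compactum is a topological space homeomorphic to a compact subset of $\mathcal{B}_1(\mathbb{N}^{\mathbb{N}})$, the space of real-valued functions of the first Baire class on the Baire space $\mathbb{N}^{\mathbb{N}}$ (pointwise limits of sequences of continuous functions), endowed with the topology of pointwise convergence. Let $I=[0,1]$. For $n\geq 2$, $S_n(I)$ is the set $I\times\{0,\ldots,n-1\}$ with the topology in which the points $(x,i)$ with $i\in\{2,\ldots,n-1\}$ are isolated, a point $(x,0)$ with $x>0$ has basic neighbourhoods $\{(x,0)\}\cup\{(y,i): z_0<y<x,\ i\in\{0,\ldots,n-1\}\}$ for $z_0\in I$, $z_0<x$, a point $(x,1)$ with $x<1$ has basic neighbourhoods $\{(x,1)\}\cup\{(y,i): x<y<z_1,\ i\in\{0,\ldots,n-1\}\}$ for $z_1\in I$, $z_1>x$, and the points $(0,0)$ and $(1,1)$ are isolated. *)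

theory Defs
  imports "HOL-Analysis.Analysis"
begin

text \<open>Baire space: the type nat \<Rightarrow> nat with the product topology (nat discrete),
  which is the library's topology instance on function types.\<close>

definition baire_class1 :: "((nat \<Rightarrow> nat) \<Rightarrow> real) set" where
  "baire_class1 = {f. \<exists>g :: nat \<Rightarrow> (nat \<Rightarrow> nat) \<Rightarrow> real.
      (\<forall>k. continuous_on UNIV (g k)) \<and> (\<forall>x. (\<lambda>k. g k x) \<longlonglongrightarrow> f x)}"

text \<open>Rosenthal compactum: homeomorphic to a compact subset of B_1(N^N) with the
  topology of pointwise convergence (product topology on (nat\<Rightarrow>nat) \<Rightarrow> real).\<close>

definition rosenthal_compactum :: "'a topology \<Rightarrow> bool" where
  "rosenthal_compactum X \<longleftrightarrow>
     (\<exists>K. K \<subseteq> baire_class1 \<and> compact K \<and> X homeomorphic_space top_of_set K)"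

definition split_interval_basis :: "nat \<Rightarrow> (real \<times> nat) set set" where
  "split_interval_basis n =
     {{(x, i)} | x i. x \<in> {0..1} \<and> 2 \<le> i \<and> i < n}
   \<union> {{(0, 0)}, {(1, 1)}}
   \<union> {insert (x, 0) {(y, i). z0 < y \<and> y < x \<and> i < n} | x z0.
        x \<in> {0..1} \<and> 0 < x \<and> z0 \<in> {0..1} \<and> z0 < x}
   \<union> {insert (x, 1) {(y, i). x < y \<and> y < z1 \<and> i < n} | x z1.
        x \<in> {0..1} \<and> x < 1 \<and> z1 \<in> {0..1} \<and> x < z1}"

definition split_interval :: "nat \<Rightarrow> (real \<times> nat) topology" where
  "split_interval n = topology_generated_by (split_interval_basis n)"

end

theory Submission imports Defs begin
lemma cont_nat: "continuous_on UNIV (g::nat \<Rightarrow> real)"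
  by (simp add: continuous_on_discrete)

definition phi :: "(nat\<Rightarrow>nat) \<Rightarrow> real" where
  "phi w = (\<Sum>k. (if w k = 0 then 0 else 1) / 2 ^ Suc k)"

lemma phi_cont: "continuous_on UNIV phi"
proof -
  let ?d = "\<lambda>k (w::nat\<Rightarrow>nat). (if w k = 0 then 0 else 1) / (2::real) ^ Suc k"
  have ul: "uniform_limit UNIV (\<lambda>N w. \<Sum>k<N. ?d k w) (\<lambda>w. suminf (\<lambda>k. ?d k w)) sequentially"
  proof (rule Weierstrass_m_test[where M="\<lambda>k. 1 / 2 ^ Suc k"])
    show "\<And>k w. w \<in> UNIV \<Longrightarrow> norm (?d k w) \<le> 1 / 2 ^ Suc k" by auto
    show "summable (\<lambda>k. 1 / (2::real) ^ Suc k)"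
    proof -
      have "summable (\<lambda>k. 1/2 * (1/2::real) ^ k)"
        by (intro summable_mult summable_geometric) auto
      moreover have "(\<lambda>k. 1/2 * (1/2::real) ^ k) = (\<lambda>k. 1 / (2::real) ^ Suc k)"
        by (auto simp: power_one_over)
      ultimately show ?thesis by metis
    qed
  qed
  have c: "continuous_on UNIV (?d k)" for k
    using continuous_on_compose2[OF cont_nat[of "\<lambda>m. (if m = 0 then 0 else 1) / (2::real) ^ Suc k"] continuous_on_product_coordinates[of k]]
    by simp
  have "continuous_on UNIV (\<lambda>w. suminf (\<lambda>k. ?d k w))"
    by (rule uniform_limit_theorem[OF _ ul]) (intro always_eventually allI continuous_on_sum c, simp_all)
  then show ?thesis unfolding phi_def[abs_def] .
qed

fun lo :: "real \<Rightarrow> nat \<Rightarrow> real" where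
  "lo x 0 = 0"
| "lo x (Suc k) = (if lo x k + 1 / 2 ^ Suc k \<le> x then lo x k + 1 / 2 ^ Suc k else lo x k)"

lemma lo_bounds: "0 \<le> x \<Longrightarrow> x \<le> 1 \<Longrightarrow> lo x k \<le> x \<and> x \<le> lo x k + 1 / 2 ^ k"
proof (induction k)
  case (Suc k)
  define h where "h = 1 / (2::real) ^ Suc k"
  have e: "1 / (2::real) ^ k = 2 * h" by (simp add: h_def)
  from Suc have i1: "lo x k \<le> x" and i2: "x \<le> lo x k + 2 * h" by (auto simp: e)
  show ?case
  proof (cases "lo x k + 1 / 2 ^ Suc k \<le> x")
    case True
    have "lo x (Suc k) = lo x k + h" using True by (simp add: h_def)
    then show ?thesis using i1 i2 True h_def by linarith
  next
    case False
    have "lo x (Suc k) = lo x k" using False by (simp add: h_def)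
    then show ?thesis using i1 i2 False h_def by linarith
  qed
qed auto

lemma phi_surj:
  assumes "0 \<le> x" "x \<le> 1" shows "\<exists>w. phi w = x"
proof -
  define w where "w k = (if lo x (Suc k) = lo x k then 0 else 1::nat)" for k
  have ps: "(\<Sum>k<N. (if w k = 0 then 0 else 1) / (2::real) ^ Suc k) = lo x N" for N
    by (induction N) (auto simp: w_def)
  have "lo x \<longlonglongrightarrow> x"
  proof (rule tendsto_sandwich[where f="\<lambda>N. x - 1 / 2 ^ N" and h="\<lambda>N. x"])
    show "\<forall>\<^sub>F N in sequentially. x - 1 / 2 ^ N \<le> lo x N"
      using lo_bounds[OF assms] by (auto simp: algebra_simps)
    show "\<forall>\<^sub>F N in sequentially. lo x N \<le> x"
      using lo_bounds[OF assms] by auto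
    have "(\<lambda>N. (1/2::real) ^ N) \<longlonglongrightarrow> 0" by (rule LIMSEQ_realpow_zero) auto
    then show "(\<lambda>N. x - 1 / 2 ^ N) \<longlonglongrightarrow> x"
      using tendsto_diff[OF tendsto_const[of x], of "\<lambda>N. (1/2::real) ^ N" 0] by (simp add: power_one_over)
  qed simp
  then have "(\<lambda>k. (if w k = 0 then 0 else 1) / (2::real) ^ Suc k) sums x"
    unfolding sums_def ps .
  then show ?thesis unfolding phi_def by (metis sums_unique)
qed

definition Hs :: "real \<Rightarrow> real \<Rightarrow> real \<Rightarrow> real" where
  "Hs x c t = (if t < x then 1 else if t = x then c else 0)"

lemma ev_big: assumes "0 < (d::real)" shows "\<forall>\<^sub>F k in sequentially. 1 \<le> real k * d"
proof -
  obtain N :: nat where N: "1 / d < real N" using reals_Archimedean2 by blast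
  show ?thesis
  proof (rule eventually_sequentiallyI[of N])
    fix k assume "N \<le> k"
    then have "1 / d \<le> real k" using N by linarith
    then show "1 \<le> real k * d" using assms by (simp add: field_simps)
  qed
qed

lemma limA: "(\<lambda>k. max 0 (min 1 (real k * (x - t)))) \<longlonglongrightarrow> (if t < x then 1 else (0::real))"
proof (cases "t < x")
  case True
  have "\<forall>\<^sub>F k in sequentially. max 0 (min 1 (real k * (x - t))) = 1"
    using ev_big[of "x - t"] True by (auto elim!: eventually_mono)
  then show ?thesis using True by (simp add: tendsto_eventually)
next
  case False
  have "max 0 (min 1 (real k * (x - t))) = 0" for k
    using False mult_nonneg_nonpos[of "real k" "x - t"] by auto
  then show ?thesis using False by simp
qed

lemma limB: "(\<lambda>k. max 0 (min 1 (1 - real k * (t - x)))) \<longlonglongrightarrow> (if t \<le> x then 1 else (0::real))"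
proof (cases "t \<le> x")
  case False
  have "\<forall>\<^sub>F k in sequentially. max 0 (min 1 (1 - real k * (t - x))) = 0"
    using ev_big[of "t - x"] False by (auto elim!: eventually_mono)
  then show ?thesis using False by (simp add: tendsto_eventually)
next
  case True
  have "max 0 (min 1 (1 - real k * (t - x))) = 1" for k
    using True mult_nonneg_nonpos[of "real k" "t - x"] by auto
  then show ?thesis using True by simp
qed

lemma Hs_baire: "(\<lambda>w. Hs x c (phi w)) \<in> baire_class1"
proof -
  define h where "h k t = (1 - c) * max 0 (min 1 (real k * (x - t))) + c * max 0 (min 1 (1 - real k * (t - x)))" for k t
  have lim: "(\<lambda>k. h k t) \<longlonglongrightarrow> Hs x c t" for t
  proof -
    have "(\<lambda>k. h k t) \<longlonglongrightarrow> (1 - c) * (if t < x then 1 else 0) + c * (if t \<le> x then 1 else 0)"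
      unfolding h_def by (intro tendsto_add tendsto_mult_left limA limB)
    moreover have "(1 - c) * (if t < x then 1 else 0) + c * (if t \<le> x then 1 else 0) = Hs x c t"
      by (auto simp: Hs_def)
    ultimately show ?thesis by simp
  qed
  have hc: "continuous_on UNIV (h k)" for k
    unfolding h_def[abs_def] by (intro continuous_intros)
  show ?thesis
    unfolding baire_class1_def
  proof (intro CollectI exI[of _ "\<lambda>k w. h k (phi w)"] conjI allI)
    fix k show "continuous_on UNIV (\<lambda>w. h k (phi w))"
      by (rule continuous_on_compose2[OF hc phi_cont]) auto
  next
    fix w show "(\<lambda>k. h k (phi w)) \<longlonglongrightarrow> Hs x c (phi w)" by (rule lim)
  qed
qed


lemma mem1: "x \<in> {0..1} \<Longrightarrow> 2 \<le> i \<Longrightarrow> i < n \<Longrightarrow> {(x, i)} \<in> split_interval_basis n"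
  unfolding split_interval_basis_def by (intro UnI1 CollectI) blast
lemma mem2: "{(0, 0)} \<in> split_interval_basis n" "{(1, 1)} \<in> split_interval_basis n"
  unfolding split_interval_basis_def by simp_all
lemma mem3: "x \<in> {0..1} \<Longrightarrow> 0 < x \<Longrightarrow> z0 \<in> {0..1} \<Longrightarrow> z0 < x \<Longrightarrow>
   insert (x, 0) {(y, i). z0 < y \<and> y < x \<and> i < n} \<in> split_interval_basis n"
  unfolding split_interval_basis_def by (intro UnI1 UnI2 CollectI exI conjI) (rule refl | assumption)+
lemma mem4: "x \<in> {0..1} \<Longrightarrow> x < 1 \<Longrightarrow> z1 \<in> {0..1} \<Longrightarrow> x < z1 \<Longrightarrow>
   insert (x, 1) {(y, i). x < y \<and> y < z1 \<and> i < n} \<in> split_interval_basis n"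
  unfolding split_interval_basis_def by (intro UnI2 CollectI exI conjI) (rule refl | assumption)+

lemma basis_sub: "B \<in> split_interval_basis n \<Longrightarrow> n \<ge> 2 \<Longrightarrow> B \<subseteq> {p. fst p \<in> {0..1} \<and> snd p < n}"
  unfolding split_interval_basis_def by (elim UnE CollectE exE conjE insertE emptyE) auto
lemma topspace_split:
  assumes "n \<ge> 2"
  shows "topspace (split_interval n) = {p. fst p \<in> {0..1} \<and> snd p < n}"
proof
  show "topspace (split_interval n) \<subseteq> {p. fst p \<in> {0..1} \<and> snd p < n}"
    unfolding split_interval_def topology_generated_by_topspace using basis_sub[OF _ assms] by blast
next
  show "{p. fst p \<in> {0..1} \<and> snd p < n} \<subseteq> topspace (split_interval n)"
  proof
    fix p :: "real \<times> nat" assume p: "p \<in> {p. fst p \<in> {0..1} \<and> snd p < n}"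
    obtain x :: real and i :: nat where pe: "p = (x, i)" by force
    have "\<exists>B \<in> split_interval_basis n. ((x::real), i) \<in> B"
    proof -
      have x01: "0 \<le> x" "x \<le> 1" "i < n" using p pe by auto
      consider "i \<ge> 2" | "i = 0" "x = 0" | "i = 0" "x > 0" | "i = 1" "x = 1" | "i = 1" "x < 1"
        using x01 by linarith
      then show ?thesis
      proof cases
        case 1 then show ?thesis using mem1[of x i n] x01 by auto
      next
        case 2 then show ?thesis using mem2[of n] by auto
      next
        case 3 then show ?thesis using mem3[of x 0 n] x01 by auto
      next
        case 4 then show ?thesis using mem2[of n] by auto
      next
        case 5 then show ?thesis using mem4[of x 1 n] x01 by auto
      qed
    qed
    then show "p \<in> topspace (split_interval n)"
      unfolding split_interval_def topology_generated_by_topspace pe by blast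
  qed
qed

lemma open_left:
  assumes "generate_topology_on (split_interval_basis n) U" "(s, 0) \<in> U" "0 < s"
  shows "\<exists>z<s. \<forall>y j. z < y \<and> y < s \<and> j < n \<longrightarrow> (y, j) \<in> U"
  using assms
proof (induction rule: generate_topology_on.induct)
  case Empty then show ?case by simp
next
  case (Int a b)
  then obtain z1 z2 where "z1 < s" "\<forall>y j. z1 < y \<and> y < s \<and> j < n \<longrightarrow> (y, j) \<in> a"
    "z2 < s" "\<forall>y j. z2 < y \<and> y < s \<and> j < n \<longrightarrow> (y, j) \<in> b" by auto
  then show ?case by (intro exI[of _ "max z1 z2"]) auto
next
  case (UN K)
  then obtain k where "k \<in> K" "(s, 0) \<in> k" by auto
  with UN.IH[of k] UN.prems show ?case by blast
next
  case (Basis B)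
  then show ?case unfolding split_interval_basis_def
  proof (elim UnE CollectE exE conjE insertE emptyE)
    fix x z0 assume "B = insert (x, 0) {(y, i). z0 < y \<and> y < x \<and> i < n}" "z0 < x"
    then show ?thesis using Basis.prems
      by (intro exI[of _ z0]) auto
  next
    fix x z1 assume "B = insert (x, 1) {(y, i). x < y \<and> y < z1 \<and> i < n}" "x < z1"
    then show ?thesis using Basis.prems
      by (intro exI[of _ x]) auto
  qed auto
qed

lemma open_right:
  assumes "generate_topology_on (split_interval_basis n) U" "(s, 1) \<in> U" "s < 1"
  shows "\<exists>z>s. \<forall>y j. s < y \<and> y < z \<and> j < n \<longrightarrow> (y, j) \<in> U"
  using assms
proof (induction rule: generate_topology_on.induct)
  case Empty then show ?case by simp
next
  case (Int a b)
  then obtain z1 z2 where "z1 > s" "\<forall>y j. s < y \<and> y < z1 \<and> j < n \<longrightarrow> (y, j) \<in> a"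
    "z2 > s" "\<forall>y j. s < y \<and> y < z2 \<and> j < n \<longrightarrow> (y, j) \<in> b" by auto
  then show ?case by (intro exI[of _ "min z1 z2"]) auto
next
  case (UN K)
  then obtain k where "k \<in> K" "(s, 1) \<in> k" by auto
  with UN.IH[of k] UN.prems show ?case by blast
next
  case (Basis B)
  then show ?case unfolding split_interval_basis_def
  proof (elim UnE CollectE exE conjE insertE emptyE)
    fix x z0 assume "B = insert (x, 0) {(y, i). z0 < y \<and> y < x \<and> i < n}" "z0 < x"
    then show ?thesis using Basis.prems
      by (intro exI[of _ x]) auto
  next
    fix x z1 assume "B = insert (x, 1) {(y, i). x < y \<and> y < z1 \<and> i < n}" "x < z1"
    then show ?thesis using Basis.prems
      by (intro exI[of _ z1]) auto
  qed auto
qed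

lemma loc_const_cont:
  assumes "\<And>p. p \<in> topspace X \<Longrightarrow> \<exists>U. openin X U \<and> p \<in> U \<and> (\<forall>q\<in>U. f q = f p)"
  shows "continuous_map X euclideanreal f"
  unfolding continuous_map_def
proof (intro conjI allI impI)
  show "f \<in> topspace X \<rightarrow> topspace euclideanreal" by simp
  fix V :: "real set" assume "openin euclideanreal V"
  have "\<exists>T. openin X T \<and> x \<in> T \<and> T \<subseteq> {x \<in> topspace X. f x \<in> V}"
    if x: "x \<in> {x \<in> topspace X. f x \<in> V}" for x
  proof -
    from x have "x \<in> topspace X" by blast
    then obtain U where U: "openin X U" "x \<in> U" "\<forall>q\<in>U. f q = f x" using assms by blast
    have "U \<subseteq> topspace X" using U(1) by (rule openin_subset)
    then have "U \<subseteq> {x \<in> topspace X. f x \<in> V}" using x U(3) by auto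
    then show ?thesis using U by blast
  qed
  then show "openin X {x \<in> topspace X. f x \<in> V}"
    using openin_subopen by blast
qed
lemma basis_open: "B \<in> split_interval_basis n \<Longrightarrow> openin (split_interval n) B"
  unfolding split_interval_def by (rule topology_generated_by_Basis)

lemma comp_cont:
  assumes "n \<ge> 2"
  shows "continuous_map (split_interval n) euclideanreal (\<lambda>p. Hs (fst p) (inverse (real (snd p))) t)"
proof (rule loc_const_cont)
  let ?G = "\<lambda>p. Hs (fst p) (inverse (real (snd p))) t"
  fix p assume p: "p \<in> topspace (split_interval n)"
  obtain x :: real and i :: nat where pe: "p = (x, i)" by force
  have x01: "0 \<le> x" "x \<le> 1" "i < n" using p pe topspace_split[OF assms] by auto
  consider "i \<ge> 2" | "i = 0" "x = 0" | "i = 0" "x > 0" | "i = 1" "x = 1" | "i = 1" "x < 1"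
    using x01 by linarith
  then show "\<exists>U. openin (split_interval n) U \<and> p \<in> U \<and> (\<forall>q\<in>U. ?G q = ?G p)"
  proof cases
    case 1 then show ?thesis using basis_open[OF mem1[of x i n]] x01 pe by auto
  next
    case 2 then show ?thesis using basis_open[OF mem2(1)[of n]] pe by auto
  next
    case 4 then show ?thesis using basis_open[OF mem2(2)[of n]] pe by auto
  next
    case 3
    define z0 where "z0 = (if t < x then max 0 t else 0)"
    have z: "z0 \<in> {0..1}" "z0 < x" using 3 x01 by (auto simp: z0_def)
    show ?thesis
    proof (intro exI conjI)
      show "openin (split_interval n) (insert (x, 0) {(y, i). z0 < y \<and> y < x \<and> i < n})"
        using basis_open[OF mem3[of x z0 n]] z 3 x01 by auto
      show "p \<in> insert (x, 0) {(y, i). z0 < y \<and> y < x \<and> i < n}" using pe 3 by simp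
      show "\<forall>q\<in>insert (x, 0) {(y, i). z0 < y \<and> y < x \<and> i < n}. ?G q = ?G p"
        using pe 3 by (auto simp: Hs_def z0_def split: if_splits)
    qed
  next
    case 5
    define z1 where "z1 = (if x < t then min 1 t else 1)"
    have z: "z1 \<in> {0..1}" "x < z1" using 5 x01 by (auto simp: z1_def)
    show ?thesis
    proof (intro exI conjI)
      show "openin (split_interval n) (insert (x, 1) {(y, i). x < y \<and> y < z1 \<and> i < n})"
        using basis_open[OF mem4[of x z1 n]] z 5 x01 by auto
      show "p \<in> insert (x, 1) {(y, i). x < y \<and> y < z1 \<and> i < n}" using pe 5 by simp
      show "\<forall>q\<in>insert (x, 1) {(y, i). x < y \<and> y < z1 \<and> i < n}. ?G q = ?G p"
        using pe 5 by (auto simp: Hs_def z1_def split: if_splits)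
    qed
  qed
qed

lemma split_open_gen: "openin (split_interval n) U \<Longrightarrow> generate_topology_on (split_interval_basis n) U"
  unfolding split_interval_def by (rule openin_topology_generated_by)

lemma split_compact:
  assumes n2: "n \<ge> 2"
  shows "compact_space (split_interval n)"
  unfolding compact_space_alt
proof (intro allI impI, elim conjE)
  fix \<U> assume op: "\<forall>U\<in>\<U>. openin (split_interval n) U"
    and cov: "topspace (split_interval n) \<subseteq> \<Union>\<U>"
  define X where "X = {p :: real \<times> nat. fst p \<in> {0..1} \<and> snd p < n}"
  have TS: "topspace (split_interval n) = X" unfolding X_def by (rule topspace_split[OF n2])
  define C where "C A \<longleftrightarrow> (\<exists>F. finite F \<and> F \<subseteq> \<U> \<and> A \<subseteq> \<Union>F)" for A
  have Cun: "C (A \<union> B)" if ca: "C A" and cb: "C B" for A B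
  proof -
    obtain F1 where f1: "finite F1" "F1 \<subseteq> \<U>" "A \<subseteq> \<Union>F1"
      using ca by (auto simp: C_def)
    obtain F2 where f2: "finite F2" "F2 \<subseteq> \<U>" "B \<subseteq> \<Union>F2"
      using cb by (auto simp: C_def)
    show ?thesis using f1 f2 unfolding C_def by (intro exI[of _ "F1 \<union> F2"]) auto
  qed
  have Cmono: "C A" if ab: "A \<subseteq> B" and cb: "C B" for A B
  proof -
    obtain F where "finite F" "F \<subseteq> \<U>" "B \<subseteq> \<Union>F" using cb by (auto simp: C_def)
    then show ?thesis using ab unfolding C_def by (intro exI[of _ F]) auto
  qed
  have Cpt: "C {a}" if aX: "a \<in> X" for a
  proof -
    obtain W where "W \<in> \<U>" "a \<in> W" using cov TS aX by blast
    then show ?thesis unfolding C_def by (intro exI[of _ "{W}"]) auto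
  qed
  have Cfin: "finite A \<Longrightarrow> A \<subseteq> X \<Longrightarrow> C A" for A
  proof (induction A rule: finite_induct)
    case empty then show ?case unfolding C_def by (intro exI[of _ "{}"]) auto
  next
    case (insert a A)
    have "C ({a} \<union> A)" using Cun[OF Cpt] insert by auto
    then show ?case by simp
  qed
  have Cline: "C {p \<in> X. fst p = t}" for t
  proof (rule Cfin)
    have "{p \<in> X. fst p = t} \<subseteq> (\<lambda>i. (t, i)) ` {..<n}" unfolding X_def by force
    then show "finite {p \<in> X. fst p = t}" by (rule finite_subset) auto
  qed auto
  have Cset: "C U" if "U \<in> \<U>" for U
    using that unfolding C_def by (intro exI[of _ "{U}"]) auto
  define G where "G = {t. 0 \<le> t \<and> t \<le> 1 \<and> C {p \<in> X. fst p \<le> t}}"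
  have "{p \<in> X. fst p \<le> 0} = {p \<in> X. fst p = 0}" unfolding X_def by force
  then have G0: "0 \<in> G" unfolding G_def using Cline[of 0] by simp
  have bdd: "bdd_above G" unfolding G_def by (rule bdd_aboveI[of _ 1]) auto
  define s where "s = Sup G"
  have s0: "0 \<le> s" unfolding s_def using cSup_upper[OF G0 bdd] .
  have s1: "s \<le> 1" unfolding s_def
  proof (rule cSup_least)
    show "G \<noteq> {}" using G0 by blast
    fix x assume "x \<in> G" then show "x \<le> 1" by (simp add: G_def)
  qed
  have sG: "s \<in> G"
  proof (cases "s = 0")
    case True then show ?thesis using G0 by simp
  next
    case False
    then have sp: "0 < s" using s0 by simp
    have "(s, 0) \<in> X" unfolding X_def using s0 s1 n2 by auto
    then obtain W where W: "W \<in> \<U>" "(s, 0) \<in> W" using cov TS by blast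
    then obtain z where z: "z < s" "\<forall>y j. z < y \<and> y < s \<and> j < n \<longrightarrow> (y, j) \<in> W"
      using open_left[OF split_open_gen[of n W] _ sp] op by blast
    then obtain t where t: "t \<in> G" "z < t" using less_cSup_iff[OF _ bdd, of z] G0 unfolding s_def by blast
    have ts: "t \<le> s" unfolding s_def by (rule cSup_upper[OF t(1) bdd])
    have "{p \<in> X. fst p \<le> s} \<subseteq> ({p \<in> X. fst p \<le> t} \<union> W) \<union> {p \<in> X. fst p = s}"
    proof
      fix p assume p: "p \<in> {p \<in> X. fst p \<le> s}"
      obtain y j where pe: "p = (y, j)" by force
      show "p \<in> ({p \<in> X. fst p \<le> t} \<union> W) \<union> {p \<in> X. fst p = s}"
      proof (cases "y \<le> t \<or> y = s")
        case True then show ?thesis using p pe by auto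
      next
        case False
        then have "z < y" "y < s" "j < n" using p pe t(2) unfolding X_def by auto
        then show ?thesis using z(2) pe by auto
      qed
    qed
    moreover have "C (({p \<in> X. fst p \<le> t} \<union> W) \<union> {p \<in> X. fst p = s})"
      using t(1) Cun Cline Cset[OF W(1)] unfolding G_def by auto
    ultimately show ?thesis unfolding G_def using s0 s1 Cmono by blast
  qed
  have "s = 1"
  proof (rule ccontr)
    assume "s \<noteq> 1"
    then have sl: "s < 1" using s1 by simp
    have "(s, 1) \<in> X" unfolding X_def using s0 s1 n2 by auto
    then obtain W where W: "W \<in> \<U>" "(s, 1) \<in> W" using cov TS by blast
    then obtain z where z: "s < z" "\<forall>y j. s < y \<and> y < z \<and> j < n \<longrightarrow> (y, j) \<in> W"
      using open_right[OF split_open_gen[of n W] _ sl] op by blast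
    define t where "t = (s + min z 1) / 2"
    have tt: "s < t" "t < z" "t \<le> 1" using z(1) sl unfolding t_def by auto
    have "{p \<in> X. fst p \<le> t} \<subseteq> {p \<in> X. fst p \<le> s} \<union> W"
    proof
      fix p assume p: "p \<in> {p \<in> X. fst p \<le> t}"
      obtain y j where pe: "p = (y, j)" by force
      show "p \<in> {p \<in> X. fst p \<le> s} \<union> W"
      proof (cases "y \<le> s")
        case True then show ?thesis using p pe by auto
      next
        case False
        then have "s < y" "y < z" "j < n" using p pe tt unfolding X_def by auto
        then show ?thesis using z(2) pe by auto
      qed
    qed
    moreover have "C ({p \<in> X. fst p \<le> s} \<union> W)"
      using sG Cun Cset[OF W(1)] unfolding G_def by auto
    ultimately have "t \<in> G" unfolding G_def using tt s0 Cmono by auto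
    then have "t \<le> s" unfolding s_def by (rule cSup_upper[OF _ bdd])
    then show False using tt by simp
  qed
  then have "C {p \<in> X. fst p \<le> 1}" using sG unfolding G_def by simp
  moreover have "X \<subseteq> {p \<in> X. fst p \<le> 1}" unfolding X_def by auto
  ultimately have "X \<subseteq> {p \<in> X. fst p \<le> 1}" "\<exists>F. finite F \<and> F \<subseteq> \<U> \<and> {p \<in> X. fst p \<le> 1} \<subseteq> \<Union>F"
    by (auto simp: C_def)
  then show "\<exists>\<F>. finite \<F> \<and> \<F> \<subseteq> \<U> \<and> topspace (split_interval n) \<subseteq> \<Union>\<F>"
    using TS by blast
qed

lemma Hausdorff_fun: "Hausdorff_space (euclidean :: ((nat \<Rightarrow> nat) \<Rightarrow> real) topology)"
  by (metis Hausdorff_space_euclidean Hausdorff_space_product_topology euclidean_product_topology)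

theorem mainTheorem5:
  fixes n :: nat
  assumes "n \<ge> 2"
  shows "rosenthal_compactum (split_interval n)"
proof -
  define F where "F p = (\<lambda>w. Hs (fst p) (inverse (real (snd p))) (phi w))" for p :: "real \<times> nat"
  let ?X = "split_interval n"
  have cont: "continuous_map ?X euclidean F"
  proof -
    have "continuous_map ?X (product_topology (\<lambda>_. euclideanreal) UNIV) F"
      unfolding continuous_map_componentwise_UNIV F_def
      using comp_cont[OF assms] by blast
    then show ?thesis by (simp add: euclidean_product_topology)
  qed
  have cpt: "compact_space ?X" by (rule split_compact[OF assms])
  have inj: "inj_on F (topspace ?X)"
  proof (rule inj_onI)
    fix p q assume p: "p \<in> topspace ?X" and q: "q \<in> topspace ?X" and e: "F p = F q"
    obtain x :: real and i :: nat where pe: "p = (x, i)" by force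
    obtain y :: real and j :: nat where qe: "q = (y, j)" by force
    have px: "0 \<le> x" "x \<le> 1" "i < n" and qy: "0 \<le> y" "y \<le> 1" "j < n"
      using p q pe qe topspace_split[OF assms] by auto
    have ev: "Hs x (inverse (real i)) t = Hs y (inverse (real j)) t" if t01: "0 \<le> t" "t \<le> 1" for t
    proof -
      obtain w where "phi w = t" using phi_surj[OF t01] by blast
      then show ?thesis using fun_cong[OF e, of w] pe qe by (simp add: F_def)
    qed
    have inv1: "inverse (real k) = 1 \<longleftrightarrow> k = 1" for k :: nat
      by (metis inverse_1 inverse_inverse_eq of_nat_1 of_nat_eq_iff)
    have xy: "x = y"
    proof (rule ccontr)
      assume "x \<noteq> y"
      then consider "x < y" | "y < x" by linarith
      then show False
      proof cases
        case 1
        have a: "inverse (real i) = 1" using ev[of x] px 1 by (simp add: Hs_def)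
        have b: "Hs x (inverse (real i)) ((x + y) / 2) = 0" using 1 by (simp add: Hs_def)
        have c: "Hs y (inverse (real j)) ((x + y) / 2) = 1" using 1 by (simp add: Hs_def)
        show False using ev[of "(x + y) / 2"] b c px qy by simp
      next
        case 2
        have b: "Hs y (inverse (real j)) ((x + y) / 2) = 0" using 2 by (simp add: Hs_def)
        have c: "Hs x (inverse (real i)) ((x + y) / 2) = 1" using 2 by (simp add: Hs_def)
        show False using ev[of "(x + y) / 2"] b c px qy by simp
      qed
    qed
    have "inverse (real i) = inverse (real j)" using ev[of x] px xy by (simp add: Hs_def)
    then have "i = j" by simp
    then show "p = q" using pe qe xy by simp
  qed
  define K where "K = F ` topspace ?X"
  have "embedding_map ?X euclidean F"
    by (rule continuous_imp_embedding_map[OF cont cpt Hausdorff_fun inj])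
  then have hm: "homeomorphic_map ?X (top_of_set K) F"
    unfolding embedding_map_def K_def .
  have "compactin euclidean K"
    unfolding K_def by (rule image_compactin[OF _ cont]) (use cpt in \<open>simp add: compact_space_def\<close>)
  then have "compact K" by simp
  moreover have "K \<subseteq> baire_class1"
    unfolding K_def F_def using Hs_baire by blast
  moreover have "?X homeomorphic_space top_of_set K"
    using homeomorphic_map_imp_homeomorphic_space[OF hm] .
  ultimately show ?thesis unfolding rosenthal_compactum_def by blast
qed
end
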